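(* Let $n\geqslant 2$, let $S$ be a caterpillar species tree with $n$ leaves, and let $G_1,G_2$ be caterpillar gene trees on the same label set as $S$ such that, for all integers $i,j$, $(i,j)\in B_{G_1,S}$ if and only if $(n-1-j,\,n-1-i)\in B_{G_2,S}$. Then $(G_1,S)$ and $(G_2,S)$ have the same number of coalescent histories.
   Context: All trees are binary, rooted, leaf-labeled. A caterpillar tree with $n$ leaves is one in which some internal node is descended from all other internal nodes. Its canonical label vector $(x_1,\dots,x_n)$ has $x_1,x_2$ the labels of the two cherry leaves and, for $3\leqslant i\leqslant n$, $x_i$ the label of the leaf separated from the root by $n-i+1$ edges. Internal nodes are numbered $1,\dots,n-1$ from the cherry to the root (node $i$ has descendant leaves $x_1,\dots,x_{i+1}$), and internal edge $i$ is the edge immediately above node $i$, including an extra edge $n-1$ above the root. A coalescent history for a gene tree $G$ and species tree $S$ on the same label set is a map $h$ from internal nodes of $G$ to internal edges of $S$ such that (1) every label of a leaf below node $v$ of $G$ labels a leaf of $S$ below edge $h(v)$, and (2) if $v_2$ is descended from $v_1$ in $G$ then $h(v_2)$ is descended from $h(v_1)$ in $S$ (objects are descended from themselves). For caterpillars $G,S$ with canonical vectors $\mathbf g,\mathbf s$, let $\sigma(x)$ be the index of label $x$ in $\mathbf s$, $F(j)=\max\{\sigma(g_1),\dots,\sigma(g_{j+1})\}-1$ for $1\leqslant j\leqslant n-1$, and $B_{G,S}=\{(i,j)\in\mathbb Z^2:1\leqslant j\leqslant i\leqslant n-1,\ i<F(j)\}$. *)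

theory Defs
  imports Main "HOL-Library.FuncSet"
begin

text \<open>A caterpillar tree with n leaves is represented by its canonical label vector
  x = [x_1,...,x_n] (a list, 0-based in Isabelle: x_k = x ! (k-1)) of distinct labels.\<close>

definition caterpillar :: "nat \<Rightarrow> 'a list \<Rightarrow> bool" where
  "caterpillar n x \<longleftrightarrow> length x = n \<and> distinct x"

text \<open>Labels of the leaves below internal node v (1 \<le> v \<le> n-1): x_1,...,x_{v+1}.
  Internal edge e lies immediately above node e, so the leaves below edge e are those
  below node e.\<close>

definition leaves_below :: "'a list \<Rightarrow> nat \<Rightarrow> 'a set" where
  "leaves_below x v = set (take (v + 1) x)"

text \<open>In a caterpillar, node v2 is descended from node v1 iff v2 \<le> v1; likewise for
  edges (including the extra root edge n-1).\<close>

definition node_desc :: "nat \<Rightarrow> nat \<Rightarrow> bool" where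
  "node_desc v2 v1 \<longleftrightarrow> v2 \<le> v1"

definition edge_desc :: "nat \<Rightarrow> nat \<Rightarrow> bool" where
  "edge_desc e2 e1 \<longleftrightarrow> e2 \<le> e1"

definition coal_history :: "'a list \<Rightarrow> 'a list \<Rightarrow> (nat \<Rightarrow> nat) \<Rightarrow> bool" where
  "coal_history g s h \<longleftrightarrow>
     (\<forall>v\<in>{1..length g - 1}. h v \<in> {1..length s - 1}) \<and>
     (\<forall>v\<in>{1..length g - 1}. leaves_below g v \<subseteq> leaves_below s (h v)) \<and>
     (\<forall>v1\<in>{1..length g - 1}. \<forall>v2\<in>{1..length g - 1}.
         node_desc v2 v1 \<longrightarrow> edge_desc (h v2) (h v1))"

definition num_coal_histories :: "'a list \<Rightarrow> 'a list \<Rightarrow> nat" where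
  "num_coal_histories g s =
     card {h \<in> {1..length g - 1} \<rightarrow>\<^sub>E {1..length s - 1}. coal_history g s h}"

definition sigma :: "'a list \<Rightarrow> 'a \<Rightarrow> nat" where
  "sigma s x = (THE i. i < length s \<and> s ! i = x) + 1"

definition Ffun :: "'a list \<Rightarrow> 'a list \<Rightarrow> nat \<Rightarrow> nat" where
  "Ffun g s j = Max ((\<lambda>k. sigma s (g ! (k - 1))) ` {1..j+1}) - 1"

definition Bset :: "'a list \<Rightarrow> 'a list \<Rightarrow> (int \<times> int) set" where
  "Bset g s = {(i, j). 1 \<le> j \<and> j \<le> i \<and> i \<le> int (length g) - 1
                        \<and> i < int (Ffun g s (nat j))}"

end

theory Submission
  imports Defs "HOL-Library.FuncSet"
begin

definition TT :: "int \<Rightarrow> (int \<times> int) set" where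
  "TT M = {(i,j). 1 \<le> j \<and> j \<le> i \<and> i \<le> M - 1}"
definition DCl :: "(int \<times> int) set \<Rightarrow> bool" where
  "DCl X \<longleftrightarrow> (\<forall>i j i'. (i,j) \<in> X \<longrightarrow> j \<le> i' \<longrightarrow> i' \<le> i \<longrightarrow> (i',j) \<in> X)"
definition RCl :: "(int \<times> int) set \<Rightarrow> bool" where
  "RCl X \<longleftrightarrow> (\<forall>i j j'. (i,j) \<in> X \<longrightarrow> j \<le> j' \<longrightarrow> j' \<le> i \<longrightarrow> (i,j') \<in> X)"
definition Valid :: "int \<Rightarrow> (int \<times> int) set \<Rightarrow> bool" where
  "Valid M X \<longleftrightarrow> X \<subseteq> TT M \<and> DCl X \<and> RCl X"
definition rf :: "int \<Rightarrow> int \<times> int \<Rightarrow> int \<times> int" where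
  "rf M p = (M - snd p, M - fst p)"
definition Hs :: "int \<Rightarrow> (nat \<Rightarrow> nat) \<Rightarrow> (int \<times> int) set" where
  "Hs M h = {(i,j). 1 \<le> j \<and> j \<le> i \<and> j \<le> M \<and> i < int (h (nat j))}"
definition Q :: "nat \<Rightarrow> (int \<times> int) set \<Rightarrow> (nat \<Rightarrow> nat) \<Rightarrow> bool" where
  "Q m B h \<longleftrightarrow> (\<forall>v\<in>{1..m}. v \<le> h v) \<and> (\<forall>v\<in>{1..m}. \<forall>w\<in>{1..m}. v \<le> w \<longrightarrow> h v \<le> h w)
     \<and> B \<subseteq> Hs (int m) h"

lemma rf_rf[simp]: "rf M (rf M p) = p"
  by (simp add: rf_def)

lemma rf_Valid: assumes "Valid M X" shows "Valid M (rf M ` X)"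
proof -
  have T: "X \<subseteq> TT M" and D: "DCl X" and R: "RCl X" using assms by (auto simp: Valid_def)
  have "rf M ` X \<subseteq> TT M" using T by (auto simp: TT_def rf_def)
  moreover have "DCl (rf M ` X)"
    unfolding DCl_def
  proof (intro allI impI)
    fix i j i' assume a: "(i,j) \<in> rf M ` X" "j \<le> i'" "i' \<le> i"
    then have "(M - j, M - i) \<in> X" by (auto simp: rf_def)
    then have "(M - j, M - i') \<in> X" using R a unfolding RCl_def by auto
    then show "(i',j) \<in> rf M ` X" by (force simp: rf_def image_iff)
  qed
  moreover have "RCl (rf M ` X)"
    unfolding RCl_def
  proof (intro allI impI)
    fix i j j' assume a: "(i,j) \<in> rf M ` X" "j \<le> j'" "j' \<le> i"
    then have "(M - j, M - i) \<in> X" by (auto simp: rf_def)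
    then have "(M - j', M - i) \<in> X" using D a unfolding DCl_def by auto
    then show "(i,j') \<in> rf M ` X" by (force simp: rf_def image_iff)
  qed
  ultimately show ?thesis by (simp add: Valid_def)
qed

lemma rf_card:
  assumes "\<forall>p. p \<in> B1 \<longleftrightarrow> rf M p \<in> B2"
  shows "card {X. Valid M X \<and> B1 \<subseteq> X} = card {X. Valid M X \<and> B2 \<subseteq> X}"
proof (rule bij_betw_same_card[of "image (rf M)"], rule bij_betw_byWitness[where f' = "image (rf M)"])
  show "\<forall>X\<in>{X. Valid M X \<and> B1 \<subseteq> X}. rf M ` rf M ` X = X" by (simp add: image_image)
  show "\<forall>X\<in>{X. Valid M X \<and> B2 \<subseteq> X}. rf M ` rf M ` X = X" by (simp add: image_image)
  show "image (rf M) ` {X. Valid M X \<and> B1 \<subseteq> X} \<subseteq> {X. Valid M X \<and> B2 \<subseteq> X}"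
  proof clarsimp
    fix X assume "Valid M X" "B1 \<subseteq> X"
    then show "Valid M (rf M ` X) \<and> B2 \<subseteq> rf M ` X"
      using rf_Valid assms by (metis image_eqI rf_rf subsetD subsetI)
  qed
  show "image (rf M) ` {X. Valid M X \<and> B2 \<subseteq> X} \<subseteq> {X. Valid M X \<and> B1 \<subseteq> X}"
  proof clarsimp
    fix X assume "Valid M X" "B2 \<subseteq> X"
    then show "Valid M (rf M ` X) \<and> B1 \<subseteq> rf M ` X"
      using rf_Valid assms by (metis image_eqI rf_rf subsetD subsetI)
  qed
qed

lemma Hs_card:
  "card {h \<in> {1..m} \<rightarrow>\<^sub>E {1..m}. Q m B h} = card {X. Valid (int m) X \<and> B \<subseteq> X}"
proof (rule bij_betw_same_card[of "Hs (int m)"], unfold bij_betw_def, intro conjI)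
  show "inj_on (Hs (int m)) {h \<in> {1..m} \<rightarrow>\<^sub>E {1..m}. Q m B h}"
  proof (rule inj_onI)
    fix h1 h2 assume h1: "h1 \<in> {h \<in> {1..m} \<rightarrow>\<^sub>E {1..m}. Q m B h}"
      and h2: "h2 \<in> {h \<in> {1..m} \<rightarrow>\<^sub>E {1..m}. Q m B h}" and eq: "Hs (int m) h1 = Hs (int m) h2"
    have key: "\<not> ha v < hb v" if "v \<in> {1..m}" "Q m B ha" "Hs (int m) ha = Hs (int m) hb" for ha hb v
    proof
      assume lt: "ha v < hb v"
      have "v \<le> ha v" using that by (auto simp: Q_def)
      then have "(int (ha v), int v) \<in> Hs (int m) hb" using that lt by (auto simp: Hs_def)
      moreover have "(int (ha v), int v) \<notin> Hs (int m) ha" by (auto simp: Hs_def)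
      ultimately show False using that by simp
    qed
    show "h1 = h2"
    proof
      fix v show "h1 v = h2 v"
      proof (cases "v \<in> {1..m}")
        case True
        then show ?thesis using key[of v h1 h2] key[of v h2 h1] h1 h2 eq by auto
      next
        case False
        then show ?thesis using h1 h2 by (auto simp: PiE_def extensional_def)
      qed
    qed
  qed
  show "Hs (int m) ` {h \<in> {1..m} \<rightarrow>\<^sub>E {1..m}. Q m B h} = {X. Valid (int m) X \<and> B \<subseteq> X}"
  proof
    show "Hs (int m) ` {h \<in> {1..m} \<rightarrow>\<^sub>E {1..m}. Q m B h} \<subseteq> {X. Valid (int m) X \<and> B \<subseteq> X}"
    proof clarify
      fix h assume hE: "h \<in> {1..m} \<rightarrow>\<^sub>E {1..m}" and q: "Q m B h"
      have hm: "h v \<le> m" if "v \<in> {1..m}" for v using hE that by auto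
      have "Hs (int m) h \<subseteq> TT (int m)"
      proof clarify
        fix i j assume "(i,j) \<in> Hs (int m) h"
        then have "1 \<le> j" "j \<le> i" "j \<le> int m" "i < int (h (nat j))" by (auto simp: Hs_def)
        moreover have "h (nat j) \<le> m" using hm[of "nat j"] \<open>1 \<le> j\<close> \<open>j \<le> int m\<close> by (simp add: nat_le_iff)
        ultimately show "(i,j) \<in> TT (int m)" by (auto simp: TT_def)
      qed
      moreover have "DCl (Hs (int m) h)" by (auto simp: DCl_def Hs_def)
      moreover have "RCl (Hs (int m) h)"
        unfolding RCl_def
      proof (intro allI impI)
        fix i j j' assume a: "(i,j) \<in> Hs (int m) h" "j \<le> j'" "j' \<le> i"
        then have b: "1 \<le> j" "j \<le> i" "j \<le> int m" "i < int (h (nat j))" by (auto simp: Hs_def)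
        have "h (nat j) \<le> m" using hm[of "nat j"] b by (simp add: nat_le_iff)
        then have "j' \<le> int m" using a b by linarith
        moreover have "h (nat j) \<le> h (nat j')" 
        proof -
          have "nat j \<in> {1..m}" "nat j' \<in> {1..m}" "nat j \<le> nat j'" using b a \<open>j' \<le> int m\<close> by auto
          then show ?thesis using q unfolding Q_def by blast
        qed
        ultimately show "(i,j') \<in> Hs (int m) h" using a b by (auto simp: Hs_def)
      qed
      ultimately show "Valid (int m) (Hs (int m) h) \<and> B \<subseteq> Hs (int m) h"
        using q by (simp add: Valid_def Q_def)
    qed
    show "{X. Valid (int m) X \<and> B \<subseteq> X} \<subseteq> Hs (int m) ` {h \<in> {1..m} \<rightarrow>\<^sub>E {1..m}. Q m B h}"
    proof clarify
      fix X assume V: "Valid (int m) X" and BX: "B \<subseteq> X"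
      have T: "X \<subseteq> TT (int m)" and D: "DCl X" and R: "RCl X" using V by (auto simp: Valid_def)
      define h where "h = (\<lambda>v. if v \<in> {1..m} then (LEAST k. v \<le> k \<and> (int k, int v) \<notin> X) else undefined)"
      have ex: "v \<le> m \<and> (int m, int v) \<notin> X" if "v \<in> {1..m}" for v
        using that T by (auto simp: TT_def)
      have hI: "v \<le> h v \<and> (int (h v), int v) \<notin> X" if "v \<in> {1..m}" for v
        unfolding h_def using that LeastI[of "\<lambda>k. v \<le> k \<and> (int k, int v) \<notin> X", OF ex[OF that]] by simp
      have hle: "h v \<le> m" if "v \<in> {1..m}" for v
        unfolding h_def using that Least_le[of "\<lambda>k. v \<le> k \<and> (int k, int v) \<notin> X", OF ex[OF that]] by simp
      have hlt: "(int k, int v) \<in> X" if "v \<in> {1..m}" "v \<le> k" "k < h v" for v k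
        using that not_less_Least[of k "\<lambda>k. v \<le> k \<and> (int k, int v) \<notin> X"] unfolding h_def by auto
      have hE: "h \<in> {1..m} \<rightarrow>\<^sub>E {1..m}"
        using hI hle by (force simp: h_def PiE_def extensional_def)
      have HX: "Hs (int m) h = X"
      proof
        show "Hs (int m) h \<subseteq> X"
        proof clarify
          fix i j assume "(i,j) \<in> Hs (int m) h"
          then have b: "1 \<le> j" "j \<le> i" "j \<le> int m" "i < int (h (nat j))" by (auto simp: Hs_def)
          then have "(int (nat i), int (nat j)) \<in> X" by (intro hlt) auto
          then show "(i,j) \<in> X" using b by simp
        qed
        show "X \<subseteq> Hs (int m) h"
        proof clarify
          fix i j assume ij: "(i,j) \<in> X"
          then have b: "1 \<le> j" "j \<le> i" "i \<le> int m - 1" using T by (auto simp: TT_def)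
          have v: "nat j \<in> {1..m}" using b by auto
          have "\<not> int (h (nat j)) \<le> i"
          proof
            assume "int (h (nat j)) \<le> i"
            moreover have "j \<le> int (h (nat j))" using hI[OF v] b by linarith
            ultimately have "(int (h (nat j)), j) \<in> X" using D ij unfolding DCl_def by blast
            then show False using hI[OF v] b by simp
          qed
          then show "(i,j) \<in> Hs (int m) h" using b by (auto simp: Hs_def)
        qed
      qed
      have "Q m B h"
        unfolding Q_def
      proof (intro conjI ballI impI)
        show "v \<le> h v" if "v \<in> {1..m}" for v using hI[OF that] by simp
        show "h v \<le> h w" if "v \<in> {1..m}" "w \<in> {1..m}" "v \<le> w" for v w
        proof (rule ccontr)
          assume "\<not> h v \<le> h w"
          then have "(int (h w), int v) \<in> X" using hlt[of v "h w"] hI[of w] that by auto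
          then have "(int (h w), int w) \<in> X" using R that hI[of w] unfolding RCl_def by auto
          then show False using hI[of w] that by auto
        qed
        show "B \<subseteq> Hs (int m) h" using HX BX by simp
      qed
      then show "X \<in> Hs (int m) ` {h \<in> {1..m} \<rightarrow>\<^sub>E {1..m}. Q m B h}" using hE HX by blast
    qed
  qed
qed

lemma sigma_nth: "distinct s \<Longrightarrow> p < length s \<Longrightarrow> sigma s (s ! p) = p + 1"
  unfolding sigma_def
  by (subst the_equality[of _ p]) (auto simp: nth_eq_iff_index_eq)

lemma leaf_iff:
  assumes cs: "caterpillar n s" and cg: "caterpillar n g" and st: "set g = set s"
    and v: "1 \<le> v" "v \<le> n - 1" and e: "1 \<le> e" "e \<le> n - 1"
  shows "leaves_below g v \<subseteq> leaves_below s e \<longleftrightarrow>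
         (v \<le> e \<and> (\<forall>i. (i, int v) \<in> Bset g s \<longrightarrow> i < int e))"
proof -
  have ls: "length s = n" "distinct s" and lg: "length g = n" "distinct g"
    using cs cg by (auto simp: caterpillar_def)
  define K where "K = (\<lambda>k. sigma s (g ! (k - 1))) ` {1..v+1}"
  have Kf: "finite K" "K \<noteq> {}" unfolding K_def by auto
  have F: "Ffun g s v = Max K - 1" unfolding Ffun_def K_def by simp
  show ?thesis
  proof
    assume sub: "leaves_below g v \<subseteq> leaves_below s e"
    have c1: "card (leaves_below g v) = v + 1"
      unfolding leaves_below_def using lg v by (simp add: distinct_card)
    have c2: "card (leaves_below s e) \<le> e + 1"
      unfolding leaves_below_def using card_length[of "take (e+1) s"] by simp
    have "card (leaves_below g v) \<le> card (leaves_below s e)"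
      by (rule card_mono[OF _ sub]) (simp add: leaves_below_def)
    then have ve: "v \<le> e" using c1 c2 by simp
    have "\<forall>x\<in>K. x \<le> e + 1"
    proof
      fix x assume "x \<in> K"
      then obtain k where k: "k \<in> {1..v+1}" "x = sigma s (g ! (k - 1))" unfolding K_def by auto
      have "k - 1 < v + 1" "k - 1 < n" using k v by auto
      then have "take (v+1) g ! (k - 1) = g ! (k - 1)" "k - 1 < length (take (v+1) g)" using lg by auto
      then have "g ! (k - 1) \<in> leaves_below g v"
        unfolding leaves_below_def by (metis nth_mem)
      then have "g ! (k - 1) \<in> set (take (e+1) s)" using sub unfolding leaves_below_def by auto
      then obtain p where p: "p < length (take (e+1) s)" "take (e+1) s ! p = g ! (k - 1)"
        by (auto simp: in_set_conv_nth)
      then have "p < e + 1" "p < n" "s ! p = g ! (k - 1)" using ls by auto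
      then show "x \<le> e + 1" using k sigma_nth[OF ls(2), of p] ls by auto
    qed
    then have "Max K \<le> e + 1" using Kf by simp
    then have "Ffun g s v \<le> e" using F by simp
    then show "v \<le> e \<and> (\<forall>i. (i, int v) \<in> Bset g s \<longrightarrow> i < int e)"
      using ve by (auto simp: Bset_def)
  next
    assume r: "v \<le> e \<and> (\<forall>i. (i, int v) \<in> Bset g s \<longrightarrow> i < int e)"
    show "leaves_below g v \<subseteq> leaves_below s e"
    proof
      fix x assume "x \<in> leaves_below g v"
      then obtain k where k0: "k < length (take (v+1) g)" "take (v+1) g ! k = x"
        unfolding leaves_below_def in_set_conv_nth by blast
      have k: "k < v + 1" "x = g ! k" "k < n" using k0 lg by auto
      have "x \<in> set s" using k lg st by (metis nth_mem)
      then obtain p where p: "p < length s" "s ! p = x" unfolding in_set_conv_nth by blast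
      have pn: "p < n" using p ls by simp
      have sg: "sigma s x = p + 1" using sigma_nth[OF ls(2) p(1)] p(2) by simp
      have "p \<le> e"
      proof (rule ccontr)
        assume pe: "\<not> p \<le> e"
        have "k + 1 \<in> {1..v+1}" using k by simp
        moreover have "sigma s x = sigma s (g ! (k + 1 - 1))" using k by simp
        ultimately have "sigma s x \<in> K" unfolding K_def by blast
        then have "p + 1 \<le> Max K" using Kf sg by (metis Max_ge)
        then have "p \<le> Ffun g s v" using F by simp
        then have c1: "int e < int (Ffun g s (nat (int v)))" using pe by simp
        have c2: "1 \<le> int v" "int v \<le> int e" "int e \<le> int (length g) - 1"
          using v e r lg by auto
        have "(int e, int v) \<in> Bset g s" unfolding Bset_def using c1 c2 by blast
        then show False using r by auto
      qed
      then have "p < length (take (e+1) s)" "take (e+1) s ! p = x" using p by auto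
      then show "x \<in> leaves_below s e" unfolding leaves_below_def by (metis nth_mem)
    qed
  qed
qed

lemma hist_iff:
  assumes cs: "caterpillar n s" and cg: "caterpillar n g" and st: "set g = set s" and n2: "n \<ge> 2"
    and hE: "h \<in> {1..n-1} \<rightarrow>\<^sub>E {1..n-1}"
  shows "coal_history g s h \<longleftrightarrow> Q (n-1) (Bset g s) h"
proof -
  have ls: "length s = n" and lg: "length g = n" using cs cg by (auto simp: caterpillar_def)
  have hr: "h v \<in> {1..n-1}" if "v \<in> {1..n-1}" for v using hE that by auto
  have L: "leaves_below g v \<subseteq> leaves_below s (h v) \<longleftrightarrow>
         (v \<le> h v \<and> (\<forall>i. (i, int v) \<in> Bset g s \<longrightarrow> i < int (h v)))" if "v \<in> {1..n-1}" for v
    using leaf_iff[OF cs cg st, of v "h v"] that hr[OF that] by auto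
  have B: "(\<forall>v\<in>{1..n-1}. \<forall>i. (i, int v) \<in> Bset g s \<longrightarrow> i < int (h v)) \<longleftrightarrow>
           Bset g s \<subseteq> Hs (int (n-1)) h"
  proof
    assume a: "\<forall>v\<in>{1..n-1}. \<forall>i. (i, int v) \<in> Bset g s \<longrightarrow> i < int (h v)"
    show "Bset g s \<subseteq> Hs (int (n-1)) h"
    proof clarify
      fix i j assume ij: "(i,j) \<in> Bset g s"
      then have b: "1 \<le> j" "j \<le> i" "i \<le> int n - 1" using lg by (auto simp: Bset_def)
      then have "nat j \<in> {1..n-1}" by auto
      moreover have "(i, int (nat j)) \<in> Bset g s" using ij b by simp
      ultimately have "i < int (h (nat j))" using a by blast
      then show "(i,j) \<in> Hs (int (n-1)) h" using b n2 by (auto simp: Hs_def)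
    qed
  next
    assume "Bset g s \<subseteq> Hs (int (n-1)) h"
    then show "\<forall>v\<in>{1..n-1}. \<forall>i. (i, int v) \<in> Bset g s \<longrightarrow> i < int (h v)"
      by (auto simp: Hs_def)
  qed
  have M: "(\<forall>v1\<in>{1..length g - 1}. \<forall>v2\<in>{1..length g - 1}.
         node_desc v2 v1 \<longrightarrow> edge_desc (h v2) (h v1)) \<longleftrightarrow>
        (\<forall>v\<in>{1..n-1}. \<forall>w\<in>{1..n-1}. v \<le> w \<longrightarrow> h v \<le> h w)"
    using lg by (auto simp: node_desc_def edge_desc_def)
  have "coal_history g s h \<longleftrightarrow> (\<forall>v\<in>{1..n-1}. leaves_below g v \<subseteq> leaves_below s (h v)) \<and>
        (\<forall>v\<in>{1..n-1}. \<forall>w\<in>{1..n-1}. v \<le> w \<longrightarrow> h v \<le> h w)"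
    unfolding coal_history_def M[symmetric] using hr ls lg by auto
  also have "\<dots> \<longleftrightarrow> Q (n-1) (Bset g s) h"
    unfolding Q_def B[symmetric] using L by blast
  finally show ?thesis .
qed

lemma num_eq:
  assumes cs: "caterpillar n s" and cg: "caterpillar n g" and st: "set g = set s" and n2: "n \<ge> 2"
  shows "num_coal_histories g s = card {X. Valid (int (n-1)) X \<and> Bset g s \<subseteq> X}"
proof -
  have ls: "length s = n" and lg: "length g = n" using cs cg by (auto simp: caterpillar_def)
  have "{h \<in> {1..length g - 1} \<rightarrow>\<^sub>E {1..length s - 1}. coal_history g s h}
      = {h \<in> {1..n-1} \<rightarrow>\<^sub>E {1..n-1}. Q (n-1) (Bset g s) h}"
    using hist_iff[OF cs cg st n2] ls lg by auto
  then show ?thesis unfolding num_coal_histories_def using Hs_card by simp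
qed

theorem lemma2:
  fixes n :: nat and s g1 g2 :: "'a list"
  assumes "n \<ge> 2"
    and "caterpillar n s" and "caterpillar n g1" and "caterpillar n g2"
    and "set g1 = set s" and "set g2 = set s"
    and "\<forall>i j :: int. (i, j) \<in> Bset g1 s \<longleftrightarrow> (int n - 1 - j, int n - 1 - i) \<in> Bset g2 s"
  shows "num_coal_histories g1 s = num_coal_histories g2 s"
proof -
  have "\<forall>p. p \<in> Bset g1 s \<longleftrightarrow> rf (int (n-1)) p \<in> Bset g2 s"
  proof
    fix p :: "int \<times> int"
    obtain i j where p: "p = (i,j)" by fastforce
    have "int (n-1) = int n - 1" using assms(1) by simp
    then have "rf (int (n-1)) p = (int n - 1 - j, int n - 1 - i)" using p by (simp add: rf_def)
    then show "p \<in> Bset g1 s \<longleftrightarrow> rf (int (n-1)) p \<in> Bset g2 s" using assms(7) p by simp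
  qed
  then have "card {X. Valid (int (n-1)) X \<and> Bset g1 s \<subseteq> X} = card {X. Valid (int (n-1)) X \<and> Bset g2 s \<subseteq> X}"
    by (rule rf_card)
  then show ?thesis using num_eq[OF assms(2,3,5,1)] num_eq[OF assms(2,4,6,1)] by simp
qed

end
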